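(* Let $R$ be an integral domain, $Q$ a prime ideal of $R[X]$, and $p = Q\cap R$. If $p^t$ is $p$-primary (equivalently $p^t = p^{(t)} = p^tR_p\cap R$) for all $t\geq 1$, then $Q$ is power stable.
   Context: An ideal $I$ of the polynomial ring $R[X]$ over an integral domain $R$ is called power stable if $I^t\cap R = (I\cap R)^t$ for all integers $t\geq 1$. *)

theory Defs
  imports "HOL-Computational_Algebra.Polynomial"
begin

definition is_ideal :: "'a::comm_ring_1 set \<Rightarrow> bool" where
  "is_ideal I \<longleftrightarrow> 0 \<in> I \<and> (\<forall>a\<in>I. \<forall>b\<in>I. a + b \<in> I) \<and> (\<forall>r a. a \<in> I \<longrightarrow> r * a \<in> I)"

definition prime_ideal :: "'a::comm_ring_1 set \<Rightarrow> bool" where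
  "prime_ideal P \<longleftrightarrow> is_ideal P \<and> P \<noteq> UNIV \<and> (\<forall>a b. a * b \<in> P \<longrightarrow> a \<in> P \<or> b \<in> P)"

definition ideal_gen :: "'a::comm_ring_1 set \<Rightarrow> 'a set" where
  "ideal_gen S = \<Inter>{J. is_ideal J \<and> S \<subseteq> J}"

definition ideal_prod :: "'a::comm_ring_1 set \<Rightarrow> 'a set \<Rightarrow> 'a set" where
  "ideal_prod I J = ideal_gen {i * j | i j. i \<in> I \<and> j \<in> J}"

primrec ideal_pow :: "'a::comm_ring_1 set \<Rightarrow> nat \<Rightarrow> 'a set" where
  "ideal_pow I 0 = UNIV"
| "ideal_pow I (Suc n) = ideal_prod I (ideal_pow I n)"

definition radical :: "'a::comm_ring_1 set \<Rightarrow> 'a set" where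
  "radical I = {a. \<exists>n. a ^ n \<in> I}"

definition primary_ideal :: "'a::comm_ring_1 set \<Rightarrow> bool" where
  "primary_ideal q \<longleftrightarrow> is_ideal q \<and> q \<noteq> UNIV \<and>
     (\<forall>a b. a * b \<in> q \<longrightarrow> a \<in> q \<or> b \<in> radical q)"

definition primary_for :: "'a::comm_ring_1 set \<Rightarrow> 'a set \<Rightarrow> bool" where
  "primary_for q P \<longleftrightarrow> primary_ideal q \<and> radical q = P"

text \<open>Contraction \<open>I \<inter> R\<close> of an ideal of \<open>R[X]\<close> to \<open>R\<close> (constants).\<close>
definition contract :: "'a::comm_ring_1 poly set \<Rightarrow> 'a set" where
  "contract I = {a. [:a:] \<in> I}"

definition power_stable :: "'a::comm_ring_1 poly set \<Rightarrow> bool" where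
  "power_stable I \<longleftrightarrow> (\<forall>t::nat. t \<ge> 1 \<longrightarrow> contract (ideal_pow I t) = ideal_pow (contract I) t)"

end

theory Submission
  imports Defs
begin

lemma ideal_0: "is_ideal I \<Longrightarrow> 0 \<in> I" by (simp add: is_ideal_def)
lemma ideal_add: "is_ideal I \<Longrightarrow> a \<in> I \<Longrightarrow> b \<in> I \<Longrightarrow> a + b \<in> I" by (simp add: is_ideal_def)
lemma ideal_mult: "is_ideal I \<Longrightarrow> a \<in> I \<Longrightarrow> r * a \<in> I" by (simp add: is_ideal_def)
lemma ideal_mult2: "is_ideal I \<Longrightarrow> a \<in> I \<Longrightarrow> a * r \<in> I"
proof -
  assume "is_ideal I" "a \<in> I"
  then have "r * a \<in> I" by (rule ideal_mult)
  then show ?thesis by (simp add: mult.commute)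
qed
lemma ideal_neg: "is_ideal I \<Longrightarrow> a \<in> I \<Longrightarrow> - a \<in> I" using ideal_mult[of I a "-1"] by simp
lemma ideal_diff: "is_ideal I \<Longrightarrow> a \<in> I \<Longrightarrow> b \<in> I \<Longrightarrow> a - b \<in> I"
proof -
  assume I: "is_ideal I" and "a \<in> I" "b \<in> I"
  then have "a + - b \<in> I" using ideal_add[OF I] ideal_neg[OF I] by blast
  then show ?thesis by simp
qed
lemma ideal_sum: assumes "is_ideal I" "finite A" "\<And>x. x \<in> A \<Longrightarrow> f x \<in> I" shows "sum f A \<in> I"
  using assms(2,3)
proof (induction A rule: finite_induct)
  case empty then show ?case by (simp add: ideal_0 assms(1))
next
  case (insert x F) then show ?case by (simp add: ideal_add assms(1))
qed

lemma gen_ideal: "is_ideal (ideal_gen S)"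
proof -
  have 0: "0 \<in> ideal_gen S" unfolding ideal_gen_def using ideal_0 by blast
  have a: "x + y \<in> ideal_gen S" if "x \<in> ideal_gen S" "y \<in> ideal_gen S" for x y
    using that ideal_add unfolding ideal_gen_def by blast
  have m: "r * x \<in> ideal_gen S" if "x \<in> ideal_gen S" for r x
    using that ideal_mult unfolding ideal_gen_def by blast
  show ?thesis unfolding is_ideal_def using 0 a m by blast
qed
lemma gen_sup: "S \<subseteq> ideal_gen S" unfolding ideal_gen_def by auto
lemma gen_least: "is_ideal J \<Longrightarrow> S \<subseteq> J \<Longrightarrow> ideal_gen S \<subseteq> J" unfolding ideal_gen_def by auto
lemma pow_ideal: "is_ideal (ideal_pow I t)"
proof (cases t)
  case 0 then show ?thesis by (simp add: is_ideal_def)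
next
  case (Suc n) then show ?thesis by (simp add: ideal_prod_def gen_ideal)
qed

lemma pow1: "is_ideal I \<Longrightarrow> ideal_pow I 1 = I"
proof -
  assume I: "is_ideal I"
  have "ideal_pow I 1 = ideal_gen {i * j |i j. i \<in> I \<and> j \<in> UNIV}"
    by (simp only: One_nat_def ideal_pow.simps ideal_prod_def)
  also have "\<dots> = I"
  proof
    show "ideal_gen {i * j |i j. i \<in> I \<and> j \<in> UNIV} \<subseteq> I"
    proof (rule gen_least[OF I], clarify)
      fix i j assume "i \<in> I"
      then show "i * j \<in> I" by (rule ideal_mult2[OF I])
    qed
    show "I \<subseteq> ideal_gen {i * j |i j. i \<in> I \<and> j \<in> UNIV}"
    proof
      fix x assume "x \<in> I"
      moreover have "x = x * 1" by simp
      ultimately have "x \<in> {i * j |i j. i \<in> I \<and> j \<in> UNIV}" by blast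
      then show "x \<in> ideal_gen {i * j |i j. i \<in> I \<and> j \<in> UNIV}"
        using gen_sup[of "{i * j |i j. i \<in> I \<and> j \<in> UNIV}"] by blast
    qed
  qed
  finally show ?thesis .
qed

lemma pow_Suc_mem: "a \<in> I \<Longrightarrow> b \<in> ideal_pow I t \<Longrightarrow> a * b \<in> ideal_pow I (Suc t)"
proof -
  assume "a \<in> I" "b \<in> ideal_pow I t"
  then have "a * b \<in> {i * j |i j. i \<in> I \<and> j \<in> ideal_pow I t}" by blast
  then show ?thesis unfolding ideal_pow.simps ideal_prod_def
    using gen_sup[of "{i * j |i j. i \<in> I \<and> j \<in> ideal_pow I t}"] by blast
qed

definition PP :: "'a::comm_ring_1 set \<Rightarrow> nat \<Rightarrow> 'a poly set" where
  "PP p t = {g. \<forall>n. coeff g n \<in> ideal_pow p t}"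

lemma PP_ideal: "is_ideal (PP p t)"
proof -
  have I: "is_ideal (ideal_pow p t)" by (rule pow_ideal)
  have 0: "0 \<in> PP p t" using ideal_0[OF I] by (simp add: PP_def)
  have a: "x + y \<in> PP p t" if "x \<in> PP p t" "y \<in> PP p t" for x y
    using that ideal_add[OF I] by (simp add: PP_def)
  have m: "r * x \<in> PP p t" if "x \<in> PP p t" for r x
  proof -
    have "coeff (r * x) n \<in> ideal_pow p t" for n
      unfolding coeff_mult
      by (rule ideal_sum[OF I]) (use that ideal_mult[OF I] in \<open>simp_all add: PP_def\<close>)
    then show ?thesis by (simp add: PP_def)
  qed
  show ?thesis unfolding is_ideal_def using 0 a m by blast
qed

lemma PP_mult: "(\<forall>n. coeff g n \<in> p) \<Longrightarrow> g' \<in> PP p t \<Longrightarrow> g * g' \<in> PP p (Suc t)"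
proof -
  assume g: "\<forall>n. coeff g n \<in> p" and g': "g' \<in> PP p t"
  have "coeff (g * g') n \<in> ideal_pow p (Suc t)" for n
    unfolding coeff_mult
  proof (rule ideal_sum[OF pow_ideal])
    show "finite {..n}" by simp
    fix i assume "i \<in> {..n}"
    have "coeff g i \<in> p" using g by blast
    moreover have "coeff g' (n - i) \<in> ideal_pow p t" using g' unfolding PP_def by blast
    ultimately show "coeff g i * coeff g' (n - i) \<in> ideal_pow p (Suc t)" by (rule pow_Suc_mem)
  qed
  then show ?thesis by (simp add: PP_def del: ideal_pow.simps)
qed

lemma smult_PP: "g \<in> PP p t \<Longrightarrow> smult c g \<in> PP p t"
proof -
  assume "g \<in> PP p t"
  then have "[:c:] * g \<in> PP p t" by (rule ideal_mult[OF PP_ideal])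
  then show ?thesis by simp
qed

definition SS :: "'a::comm_ring_1 set \<Rightarrow> 'a \<Rightarrow> 'a poly \<Rightarrow> nat \<Rightarrow> 'a poly set" where
  "SS p s f t = {h. \<exists>k g w. smult (s^k) h = g + f * w \<and> g \<in> PP p t}"

lemma SS_ideal: "is_ideal (SS p s f t)"
  unfolding is_ideal_def
proof (intro conjI ballI allI impI)
  show "0 \<in> SS p s f t" unfolding SS_def
    using ideal_0[OF PP_ideal] by (intro CollectI exI[of _ 0]) auto
next
  fix a b assume "a \<in> SS p s f t" "b \<in> SS p s f t"
  then obtain k1 g1 w1 k2 g2 w2 where 1: "smult (s^k1) a = g1 + f * w1" "g1 \<in> PP p t"
    and 2: "smult (s^k2) b = g2 + f * w2" "g2 \<in> PP p t" unfolding SS_def by blast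
  have "smult (s^(k1+k2)) (a + b) = smult (s^k2) (smult (s^k1) a) + smult (s^k1) (smult (s^k2) b)"
    by (simp add: power_add smult_add_right mult.commute)
  also have "\<dots> = (smult (s^k2) g1 + smult (s^k1) g2) + f * (smult (s^k2) w1 + smult (s^k1) w2)"
    unfolding 1 2 by (simp add: algebra_simps smult_add_right)
  finally show "a + b \<in> SS p s f t" unfolding SS_def
    using ideal_add[OF PP_ideal smult_PP[OF 1(2)] smult_PP[OF 2(2)]] by blast
next
  fix r a assume "a \<in> SS p s f t"
  then obtain k g w where 1: "smult (s^k) a = g + f * w" "g \<in> PP p t" unfolding SS_def by blast
  have "smult (s^k) (r * a) = r * g + f * (r * w)"
  proof -
    have "smult (s^k) (r * a) = r * smult (s^k) a" by simp
    also have "\<dots> = r * (g + f * w)" by (simp only: 1)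
    also have "\<dots> = r * g + f * (r * w)" by (simp add: distrib_left mult.left_commute)
    finally show ?thesis .
  qed
  then show "r * a \<in> SS p s f t" unfolding SS_def
    using ideal_mult[OF PP_ideal 1(2)] by blast
qed

lemma SS0: "SS p s f 0 = UNIV"
proof -
  have "h \<in> SS p s f 0" for h
    unfolding SS_def PP_def by (rule CollectI, rule exI[of _ 0], rule exI[of _ h], rule exI[of _ 0]) simp
  then show ?thesis by blast
qed

lemma SS_mult:
  assumes p: "is_ideal p" and h: "h \<in> SS p s f 1" and h': "h' \<in> SS p s f t"
  shows "h * h' \<in> SS p s f (Suc t)"
proof -
  obtain k1 g1 w1 k2 g2 w2 where 1: "smult (s^k1) h = g1 + f * w1" "g1 \<in> PP p 1"
    and 2: "smult (s^k2) h' = g2 + f * w2" "g2 \<in> PP p t" using h h' unfolding SS_def by blast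
  have c: "\<forall>n. coeff g1 n \<in> p" using 1(2) pow1[OF p] by (simp add: PP_def)
  have "smult (s^(k1+k2)) (h * h') = smult (s^k1) h * smult (s^k2) h'"
    by (simp add: power_add mult_smult_left mult_smult_right mult.commute)
  also have "\<dots> = g1 * g2 + f * (w1 * g2 + g1 * w2 + f * w1 * w2)"
    unfolding 1 2 by (simp add: algebra_simps)
  finally show ?thesis unfolding SS_def using PP_mult[OF c 2(2)] by blast
qed

lemma pow_sub:
  assumes p: "is_ideal p" and Q: "Q \<subseteq> SS p s f 1"
  shows "ideal_pow Q t \<subseteq> SS p s f t"
proof (induction t)
  case 0 then show ?case by (simp add: SS0)
next
  case (Suc t)
  show ?case unfolding ideal_pow.simps ideal_prod_def
    by (rule gen_least[OF SS_ideal]) (use Suc Q SS_mult[OF p] in blast)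
qed

lemma pdiv:
  fixes f g :: "'a::idom poly"
  assumes Z: "is_ideal Z" and g: "g \<in> Z" and d: "degree f \<ge> 1"
    and H: "\<And>h k. h \<in> Z \<Longrightarrow> monom (lead_coeff h) k * f \<in> Z"
  shows "\<exists>e u r. smult (lead_coeff f ^ e) g = f * u + r \<and> r \<in> Z \<and> degree r < degree f"
  using g
proof (induction "degree g" arbitrary: g rule: less_induct)
  case less
  show ?case
  proof (cases "degree g < degree f")
    case True
    then show ?thesis using less by (intro exI[of _ 0] exI[of _ 0] exI[of _ g]) auto
  next
    case False
    define n where "n = degree g"
    define s where "s = lead_coeff f"
    define c where "c = lead_coeff g"
    define g' where "g' = smult s g - monom c (n - degree f) * f"
    have g'Z: "g' \<in> Z" unfolding g'_def c_def
      using ideal_diff[OF Z ideal_mult[OF Z less(2), of "[:s:]"] H[OF less(2)]] by simp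
    have le1: "degree (monom c (n - degree f) * f) \<le> n"
      using degree_mult_le[of "monom c (n - degree f)" f] degree_monom_le[of c "n - degree f"] False
      unfolding n_def by linarith
    have "degree g' \<le> n" unfolding g'_def
      using degree_diff_le[OF _ le1, of "smult s g"] by (simp add: n_def)
    moreover have "coeff g' n = 0"
      using False unfolding g'_def c_def s_def n_def by (simp add: coeff_monom_mult)
    moreover have "n > 0" using False d n_def by linarith
    ultimately have "degree g' < n"
      by (metis leading_coeff_0_iff le_neq_implies_less degree_0)
    then obtain e u r where IH: "smult (s ^ e) g' = f * u + r" "r \<in> Z" "degree r < degree f"
      using less(1)[OF _ g'Z] unfolding n_def s_def by blast
    have eq: "smult s g = g' + monom c (n - degree f) * f" unfolding g'_def by simp
    have "smult (s ^ Suc e) g = smult (s^e) (smult s g)" by (simp add: mult.commute)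
    also have "\<dots> = f * (u + smult (s^e) (monom c (n - degree f))) + r"
      unfolding eq smult_add_right IH(1) by (simp add: algebra_simps)
    finally show ?thesis using IH unfolding s_def by blast
  qed
qed

lemma const_mult: "[:a * b:] = [:a:] * [:b:]" by (simp add: mult.commute)
lemma const_add: "[:a + b:] = [:a:] + [:b:]" by simp

lemma contract_ideal:
  assumes I: "is_ideal I" shows "is_ideal (contract I)"
proof -
  have 0: "0 \<in> contract I" using ideal_0[OF I] by (simp add: contract_def)
  have a: "a + b \<in> contract I" if "a \<in> contract I" "b \<in> contract I" for a b
    using ideal_add[OF I, of "[:a:]" "[:b:]"] that by (simp add: contract_def)
  have m: "r * a \<in> contract I" if "a \<in> contract I" for r a
    using ideal_mult[OF I, of "[:a:]" "[:r:]"] that by (simp add: contract_def mult.commute)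
  show ?thesis unfolding is_ideal_def using 0 a m by blast
qed

lemma poly_in_ideal: "is_ideal Z \<Longrightarrow> (\<forall>n. [:coeff h n:] \<in> Z) \<Longrightarrow> h \<in> Z"
proof (induction h rule: pCons_induct)
  case 0 then show ?case by (simp add: ideal_0)
next
  case (pCons a h)
  have "\<forall>n. [:coeff h n:] \<in> Z"
  proof
    fix n show "[:coeff h n:] \<in> Z" using pCons(4)[rule_format, of "Suc n"] by simp
  qed
  then have hZ: "h \<in> Z" using pCons by blast
  have a: "[:a:] \<in> Z" using pCons(4)[rule_format, of 0] by simp
  have "pCons a h = [:a:] + [:0,1:] * h" by simp
  then show ?case using ideal_add[OF pCons(3) a ideal_mult[OF pCons(3) hZ, of "[:0,1:]"]] by metis
qed


lemma contract_pow_sup: "ideal_pow (contract Q) t \<subseteq> contract (ideal_pow Q t)"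
proof (induction t)
  case 0 then show ?case by (simp add: contract_def)
next
  case (Suc t)
  have "{i * j |i j. i \<in> contract Q \<and> j \<in> ideal_pow (contract Q) t} \<subseteq> contract (ideal_pow Q (Suc t))"
  proof clarify
    fix i j assume i: "i \<in> contract Q" and j: "j \<in> ideal_pow (contract Q) t"
    have "[:i:] \<in> Q" "[:j:] \<in> ideal_pow Q t" using i j Suc by (auto simp: contract_def)
    then have "[:i:] * [:j:] \<in> ideal_pow Q (Suc t)" by (rule pow_Suc_mem)
    then show "i * j \<in> contract (ideal_pow Q (Suc t))" by (metis const_mult contract_def mem_Collect_eq)
  qed
  then show ?case unfolding ideal_pow.simps(2)[of "contract Q"] ideal_prod_def
    by (rule gen_least[OF contract_ideal[OF pow_ideal]])
qed

lemma PPQ: "is_ideal Q \<Longrightarrow> (\<forall>n. coeff h n \<in> contract Q) \<Longrightarrow> h \<in> Q"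
  by (rule poly_in_ideal) (auto simp: contract_def)

theorem mainTheorem13:
  fixes Q :: "'a::idom poly set"
  assumes "prime_ideal Q"
    and "\<forall>t::nat. t \<ge> 1 \<longrightarrow> primary_for (ideal_pow (contract Q) t) (contract Q)"
  shows "power_stable Q"
proof -
  define p where "p = contract Q"
  have QI: "is_ideal Q" and QU: "Q \<noteq> UNIV" and QP: "\<And>a b. a * b \<in> Q \<Longrightarrow> a \<in> Q \<or> b \<in> Q"
    using assms(1) by (auto simp: prime_ideal_def)
  have pI: "is_ideal p" unfolding p_def by (rule contract_ideal[OF QI])
  have pP: "a \<in> p \<or> b \<in> p" if "a * b \<in> p" for a b
    using that QP[of "[:a:]" "[:b:]"] by (metis const_mult p_def contract_def mem_Collect_eq)
  have one: "1 \<notin> p"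
  proof
    assume "1 \<in> p"
    then have "(1::'a poly) \<in> Q" by (simp add: p_def contract_def one_pCons)
    then have "x \<in> Q" for x using ideal_mult[OF QI, of 1 x] by simp
    then show False using QU by blast
  qed
  have powp: "s ^ m \<in> p \<Longrightarrow> s \<in> p" for s m
  proof (induction m)
    case 0 then show ?case using one by simp
  next
    case (Suc m)
    then have "s * s ^ m \<in> p" by simp
    then have "s \<in> p \<or> s ^ m \<in> p" by (rule pP)
    then show ?case using Suc.IH by blast
  qed
  have sub: "contract (ideal_pow Q t) \<subseteq> ideal_pow p t" if t: "t \<ge> 1" for t
  proof
    fix a assume a: "a \<in> contract (ideal_pow Q t)"
    have prim: "primary_for (ideal_pow p t) p" using assms(2) t p_def by blast
    have fin: "a \<in> ideal_pow p t" if "s \<notin> p" "s ^ m * a \<in> ideal_pow p t" for s m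
    proof -
      have "a * s ^ m \<in> ideal_pow p t" using that by (simp add: mult.commute)
      then have "a \<in> ideal_pow p t \<or> s ^ m \<in> radical (ideal_pow p t)"
        using prim unfolding primary_for_def primary_ideal_def by blast
      moreover have "radical (ideal_pow p t) = p" using prim by (simp add: primary_for_def)
      ultimately show ?thesis using that(1) powp by blast
    qed
    show "a \<in> ideal_pow p t"
    proof (cases "\<forall>q\<in>Q. \<forall>n. coeff q n \<in> p")
      case True
      have "Q \<subseteq> SS p 1 0 1"
      proof
        fix q assume "q \<in> Q"
        then have "q \<in> PP p 1" using True pow1[OF pI] by (simp add: PP_def)
        then show "q \<in> SS p 1 0 1" unfolding SS_def
          by (intro CollectI exI[of _ 0] exI[of _ q]) simp
      qed
      then have "[:a:] \<in> SS p 1 0 t" using pow_sub[OF pI, of Q 1 0 t] a by (auto simp: contract_def)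
      then obtain k g w where kg: "smult (1^k) [:a:] = g + 0 * w" "g \<in> PP p t" unfolding SS_def by blast
      have "g = [:a:]" using kg(1) by simp
      moreover have "coeff g 0 \<in> ideal_pow p t" using kg(2) by (simp add: PP_def del: ideal_pow.simps)
      ultimately show ?thesis by simp
    next
      case False
      define M where "M = {q\<in>Q. \<exists>n. coeff q n \<notin> p}"
      obtain q0 where "q0 \<in> M" using False M_def by blast
      then obtain f where fM: "f \<in> M" and fmin: "\<And>h. h \<in> M \<Longrightarrow> degree f \<le> degree h"
        using ex_has_least_nat[of "\<lambda>q. q \<in> M" q0 degree] by blast
      have fQ: "f \<in> Q" using fM M_def by blast
      have small: "\<forall>n. coeff r n \<in> p" if "r \<in> Q" "degree r < degree f" for r
      proof (rule ccontr)
        assume "\<not> (\<forall>n. coeff r n \<in> p)"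
        then have "r \<in> M" using that(1) unfolding M_def by blast
        then show False using fmin[of r] that(2) by simp
      qed
      have d: "degree f \<ge> 1"
      proof (rule ccontr)
        assume "\<not> degree f \<ge> 1"
        then have "degree f = 0" by simp
        have c0: "coeff f 0 \<in> p" using fQ degree_0_id[OF \<open>degree f = 0\<close>] by (simp add: p_def contract_def)
        have "coeff f n \<in> p" for n
          using c0 \<open>degree f = 0\<close> ideal_0[OF pI] by (cases n) (auto simp: coeff_eq_0)
        then show False using fM M_def by blast
      qed
      define s where "s = lead_coeff f"
      have sp: "s \<notin> p"
      proof
        assume sp: "s \<in> p"
        define f' where "f' = f - monom s (degree f)"
        have "monom s (degree f) \<in> Q"
          by (rule PPQ[OF QI]) (use sp ideal_0[OF pI] in \<open>auto simp: p_def coeff_monom\<close>)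
        then have f'Q: "f' \<in> Q" unfolding f'_def using ideal_diff[OF QI fQ] by blast
        obtain n where n: "coeff f n \<notin> p" using fM M_def by blast
        then have "n \<noteq> degree f" using sp s_def by auto
        then have "coeff f' n \<notin> p" using n by (simp add: f'_def coeff_monom)
        then have f'M: "f' \<in> M" using f'Q M_def by blast
        have "degree f' \<le> degree f" unfolding f'_def
          by (rule degree_diff_le) (auto simp: degree_monom_le)
        moreover have "coeff f' (degree f) = 0" by (simp add: f'_def s_def)
        ultimately have "degree f' < degree f"
        proof -
          assume le: "degree f' \<le> degree f" and c: "coeff f' (degree f) = 0"
          show ?thesis
          proof (rule ccontr)
            assume "\<not> degree f' < degree f"
            then have "degree f' = degree f" using le by simp
            then have "f' = 0" using c by (metis leading_coeff_0_iff)
            then show False using d \<open>degree f' = degree f\<close> by simp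
          qed
        qed
        then show False using fmin[OF f'M] by simp
      qed
      have f0: "f \<noteq> 0" using d by auto
      have "Q \<subseteq> SS p s f 1"
      proof
        fix q assume q: "q \<in> Q"
        obtain e u r where r: "smult (lead_coeff f ^ e) q = f * u + r" "r \<in> Q" "degree r < degree f"
          using pdiv[OF QI q d] ideal_mult[OF QI fQ] by blast
        have "r \<in> PP p 1" using small[OF r(2,3)] pow1[OF pI] by (simp add: PP_def)
        moreover have "smult (s ^ e) q = r + f * u" using r(1) s_def by (simp add: add.commute)
        ultimately show "q \<in> SS p s f 1" unfolding SS_def by blast
      qed
      then have "[:a:] \<in> SS p s f t" using pow_sub[OF pI, of Q s f t] a by (auto simp: contract_def)
      then obtain k g w where kg: "smult (s^k) [:a:] = g + f * w" "g \<in> PP p t" unfolding SS_def by blast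
      have H: "monom (lead_coeff h) j * f \<in> PP p t" if "h \<in> PP p t" for h j
      proof -
        have lc: "lead_coeff h \<in> ideal_pow p t" using that by (simp add: PP_def)
        have "coeff (monom (lead_coeff h) j * f) n \<in> ideal_pow p t" for n
          using ideal_0[OF pow_ideal, of p t] ideal_mult2[OF pow_ideal lc] by (simp add: coeff_monom_mult)
        then show ?thesis by (simp add: PP_def)
      qed
      obtain e u r where r: "smult (s ^ e) g = f * u + r" "r \<in> PP p t" "degree r < degree f"
        using pdiv[OF PP_ideal kg(2) d H] s_def by blast
      define X where "X = u + smult (s^e) w"
      have eq: "[:s^(e+k) * a:] - r = f * X"
      proof -
        have "[:s^(e+k) * a:] = smult (s^e) (smult (s^k) [:a:])" by (simp add: power_add)
        also have "\<dots> = f * u + r + f * smult (s^e) w" unfolding kg(1) smult_add_right r(1) by simp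
        finally show ?thesis unfolding X_def by (simp add: algebra_simps)
      qed
      have X0: "X = 0"
      proof (rule ccontr)
        assume "X \<noteq> 0"
        then have "degree (f * X) \<ge> degree f" using f0 by (simp add: degree_mult_eq)
        moreover have "degree ([:s^(e+k) * a:] - r) < degree f"
          using degree_diff_le[of "[:s^(e+k) * a:]" "degree r" r] r(3) d by simp
        ultimately show False using eq by simp
      qed
      then have "r = [:s^(e+k) * a:]" using eq by simp
      moreover have "coeff r 0 \<in> ideal_pow p t" using r(2) by (simp add: PP_def del: ideal_pow.simps)
      ultimately have "s^(e+k) * a \<in> ideal_pow p t" by simp
      then show ?thesis using fin[OF sp] by blast
    qed
  qed
  show ?thesis unfolding power_stable_def
  proof (intro allI impI)
    fix t :: nat assume t: "t \<ge> 1"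
    have "contract (ideal_pow Q t) \<subseteq> ideal_pow (contract Q) t" using sub[OF t] by (simp only: p_def)
    then show "contract (ideal_pow Q t) = ideal_pow (contract Q) t"
      using contract_pow_sup[of Q t] by (rule equalityI)
  qed
qed

end
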